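(* Let $P \in \mathbb{C}[X]$ be a polynomial of degree $d \ge 1$ with exactly $r$ distinct complex roots. Let $G=(V,E)$ be a finite simple undirected graph (no loops, no multiple edges) whose vertex set $V$ is a subset of the set of distinct complex roots of $P$. Then $$ \prod_{\{v_i, v_j\} \in E} |v_i - v_j| \ \ge \ |\mathrm{sDisc}_{d-r}(P)|^{1/2} \, \mathrm{M}(P)^{-(r-1)} \, \Big(\frac{r}{\sqrt{3}}\Big)^{-\#E} \,r^{-r/2} \, \Big(\frac13\Big)^{\min \{d,\, 2d-2r\}/6}, $$ where the product runs over the edges of $G$ (each edge counted once) and $\#E$ is the number of edges.
   Context: Write $P = a_d \prod_{j=1}^r (X - v_j)^{m_j}$ with $a_d \ne 0$, $v_1,\dots,v_r$ pairwise distinct, $m_j \in \mathbb{N}$, $\sum_j m_j = d$; let $x_1,\dots,x_d$ be the roots of $P$ listed with multiplicity. The Mahler measure is $\mathrm{M}(P) = |a_d| \prod_{i=1}^d \max\{1,|x_i|\}$. For $0 \le k < d$, the $k$-th subdiscriminant is $\mathrm{sDisc}_k(P) = a_d^{2(d-k)-2} \sum_{I \subset \{1,\dots,d\},\ |I| = d-k} \ \prod_{i,j \in I,\ i<j} (x_i - x_j)^2$. In particular $|\mathrm{sDisc}_{d-r}(P)|^{1/2} = |a_d|^{r-1} \big(\prod_{j=1}^r m_j\big)^{1/2} \prod_{1\le i<j\le r}|v_i - v_j|$, and when $P$ is square-free ($r=d$) $\mathrm{sDisc}_0(P)$ is the discriminant of $P$ up to sign. *)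

theory Defs
  imports "HOL-Computational_Algebra.Polynomial" Complex_Main
begin

text \<open>For P of degree d >= 1 such a list exists
  (fundamental theorem of algebra) and is unique up to permutation; all
  quantities below are symmetric in the roots, hence well defined.\<close>
definition root_list :: "complex poly \<Rightarrow> complex list" where
  "root_list P = (SOME xs. P = smult (lead_coeff P) (\<Prod>x\<leftarrow>xs. [:- x, 1:]))"

definition mahler_measure :: "complex poly \<Rightarrow> real" where
  "mahler_measure P = cmod (lead_coeff P) * (\<Prod>x\<leftarrow>root_list P. max 1 (cmod x))"

definition sDisc :: "complex poly \<Rightarrow> nat \<Rightarrow> complex" where
  "sDisc P k = (let d = degree P; xs = root_list P in
     lead_coeff P ^ (2 * (d - k) - 2) *
     (\<Sum>I\<in>{I. I \<subseteq> {0..<d} \<and> card I = d - k}.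
        \<Prod>(i, j)\<in>{(i, j). i \<in> I \<and> j \<in> I \<and> i < j}. (xs ! i - xs ! j) ^ 2))"

definition edge_length :: "complex set \<Rightarrow> real" where
  "edge_length e = (THE l. \<exists>u v. e = {u, v} \<and> l = cmod (u - v))"

end

theory Submission imports Defs "Jordan_Normal_Form.Determinant" "HOL-Computational_Algebra.Fundamental_Theorem_Algebra" begin


fun dd :: "complex list \<Rightarrow> (complex \<Rightarrow> complex) \<Rightarrow> complex" where
  "dd [] f = 0"
| "dd [x] f = f x"
| "dd (x # y # ys) f = (dd (x # ys) f - dd (y # ys) f) / (x - y)"

lemma dd_add: "dd L (\<lambda>z. f z + g z) = dd L f + dd L g"
  by (induction L f rule: dd.induct) (simp_all add: add_divide_distrib[symmetric] algebra_simps)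

lemma dd_cmult: "dd L (\<lambda>z. c * f z) = c * dd L f"
  by (induction L f rule: dd.induct) (simp_all add: right_diff_distrib)

lemma dd_zero_fun: "dd L (\<lambda>z. 0) = 0"
  by (induction L "\<lambda>z::complex. 0::complex" rule: dd.induct) simp_all

lemma dd_sum: "dd L (\<lambda>z. \<Sum>j\<in>A. g j z) = (\<Sum>j\<in>A. dd L (g j))"
proof (induction A rule: infinite_finite_induct)
  case (infinite A) then show ?case by (simp add: dd_zero_fun)
next
  case empty then show ?case by (simp add: dd_zero_fun)
next
  case (insert x F) then show ?case by (simp add: dd_add)
qed

lemma dd_cong: "(\<And>z. z \<in> set L \<Longrightarrow> f z = g z) \<Longrightarrow> dd L f = dd L g"
  by (induction L f rule: dd.induct) auto

lemma dd_vanish: "(\<And>z. z \<in> set L \<Longrightarrow> f z = 0) \<Longrightarrow> dd L f = 0"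
  using dd_cong[of L f "\<lambda>z. 0"] dd_zero_fun by simp

lemma dd_const_gen: "dd (x # ys) (\<lambda>z. c) = (if ys = [] then c else 0)"
proof (induction ys arbitrary: x)
  case Nil then show ?case by simp
next
  case (Cons a ys) then show ?case by (simp only: dd.simps(3) Cons.IH) simp
qed

lemma dd_const: "dd (x # y # ys) (\<lambda>z. c) = 0"
  using dd_const_gen[of x "y # ys" c] by simp

lemma dd_diag:
  assumes "distinct (x # ys)" "\<And>y. y \<in> set ys \<Longrightarrow> f y = 0"
  shows "dd (x # ys) f = f x / (\<Prod>y\<leftarrow>ys. x - y)"
  using assms
proof (induction ys)
  case Nil then show ?case by simp
next
  case (Cons y ys)
  have "dd (y # ys) f = 0" by (rule dd_vanish) (use Cons.prems in auto)
  moreover have "dd (x # ys) f = f x / (\<Prod>y\<leftarrow>ys. x - y)"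
    by (rule Cons.IH) (use Cons.prems in auto)
  ultimately show ?case by (simp add: field_simps)
qed

lemma dd_shift:
  assumes "distinct (x # y # ys)"
  shows "dd (x # y # ys) (\<lambda>z. z * f z) = x * dd (x # y # ys) f + dd (y # ys) f"
  using assms
proof (induction ys arbitrary: x y)
  case Nil
  then have "x - y \<noteq> 0" by auto
  then show ?case by (simp add: field_simps)
next
  case (Cons z zs)
  have xy: "x - y \<noteq> 0" using Cons.prems by auto
  have A: "dd (x # z # zs) (\<lambda>z. z * f z) = x * dd (x # z # zs) f + dd (z # zs) f"
    by (rule Cons.IH) (use Cons.prems in auto)
  have B: "dd (y # z # zs) (\<lambda>z. z * f z) = y * dd (y # z # zs) f + dd (z # zs) f"
    by (rule Cons.IH) (use Cons.prems in auto)
  have alg: "\<And>a b c. (x * a + c - (y * b + c)) / (x - y) = x * ((a - b) / (x - y)) + b"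
    using xy by (simp add: field_simps)
  have "dd (x # y # z # zs) (\<lambda>z. z * f z) =
     (dd (x # z # zs) (\<lambda>z. z * f z) - dd (y # z # zs) (\<lambda>z. z * f z)) / (x - y)"
    by (simp only: dd.simps(3))
  also have "\<dots> = x * ((dd (x # z # zs) f - dd (y # z # zs) f) / (x - y)) + dd (y # z # zs) f"
    unfolding A B by (rule alg)
  also have "(dd (x # z # zs) f - dd (y # z # zs) f) / (x - y) = dd (x # y # z # zs) f"
    by (simp only: dd.simps(3))
  finally show ?case by simp
qed

lemma dd_pow_bound:
  assumes "distinct (x # ys)" "\<And>z. z \<in> set (x # ys) \<Longrightarrow> cmod z \<le> R" "0 \<le> R"
  shows "cmod (dd (x # ys) (\<lambda>z. z ^ k)) \<le> real (k choose length ys) * R ^ (k - length ys)"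
  using assms
proof (induction k arbitrary: x ys)
  case 0
  then show ?case
  proof (cases ys)
    case Nil then show ?thesis by simp
  next
    case (Cons y ys') then show ?thesis by (simp del: dd.simps(3) add: dd_const)
  qed
next
  case (Suc k)
  show ?case
  proof (cases ys)
    case Nil
    then have "cmod x \<le> R" using Suc.prems by auto
    then have "cmod (x ^ Suc k) \<le> R ^ Suc k" by (metis norm_power norm_ge_zero power_mono)
    then show ?thesis using Nil by simp
  next
    case (Cons y ys')
    let ?s = "length ys'"
    have eq: "dd (x # ys) (\<lambda>z. z ^ Suc k) = x * dd (x # ys) (\<lambda>z. z ^ k) + dd (y # ys') (\<lambda>z. z ^ k)"
      using dd_shift[of x y ys' "\<lambda>z. z ^ k"] Suc.prems Cons by simp
    have h1: "cmod (dd (x # ys) (\<lambda>z. z ^ k)) \<le> real (k choose Suc ?s) * R ^ (k - Suc ?s)"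
      using Suc.IH[of x ys] Suc.prems Cons by simp
    have h2: "cmod (dd (y # ys') (\<lambda>z. z ^ k)) \<le> real (k choose ?s) * R ^ (k - ?s)"
      using Suc.IH[of y ys'] Suc.prems Cons by simp
    have xR: "cmod x \<le> R" using Suc.prems by auto
    have h3: "R * (real (k choose Suc ?s) * R ^ (k - Suc ?s)) \<le> real (k choose Suc ?s) * R ^ (k - ?s)"
    proof (cases "Suc ?s \<le> k")
      case True
      then have "k - ?s = Suc (k - Suc ?s)" by simp
      then show ?thesis by simp
    next
      case False
      then have "(k choose Suc ?s) = 0" by (simp add: binomial_eq_0)
      then show ?thesis by (metis mult_zero_left mult_zero_right of_nat_0 order_refl)
    qed
    have "cmod (dd (x # ys) (\<lambda>z. z ^ Suc k)) \<le> cmod x * cmod (dd (x # ys) (\<lambda>z. z ^ k)) + cmod (dd (y # ys') (\<lambda>z. z ^ k))"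
      unfolding eq by (metis norm_mult norm_triangle_ineq)
    also have "\<dots> \<le> R * (real (k choose Suc ?s) * R ^ (k - Suc ?s)) + real (k choose ?s) * R ^ (k - ?s)"
      by (intro add_mono mult_mono h1 h2 xR) (use Suc.prems in auto)
    also have "\<dots> \<le> real (k choose Suc ?s) * R ^ (k - ?s) + real (k choose ?s) * R ^ (k - ?s)"
      using h3 by simp
    also have "\<dots> = real (Suc k choose length ys) * R ^ (Suc k - length ys)"
      using Cons by (simp add: algebra_simps)
    finally show ?thesis .
  qed
qed



interpretation cnj_hom: comm_ring_hom cnj
  by unfold_locales auto

lemma det_cnj: "det (map_mat cnj A) = cnj (det A)"
  by (rule cnj_hom.hom_det)

definition ip :: "nat \<Rightarrow> (nat \<Rightarrow> complex) \<Rightarrow> (nat \<Rightarrow> complex) \<Rightarrow> complex" where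
  "ip n a b = (\<Sum>j<n. a j * cnj (b j))"

definition nrm2 :: "nat \<Rightarrow> (nat \<Rightarrow> complex) \<Rightarrow> real" where
  "nrm2 n a = (\<Sum>j<n. (cmod (a j))^2)"

lemma ip_self: "ip n a a = complex_of_real (nrm2 n a)"
  unfolding ip_def nrm2_def by (simp only: of_real_sum complex_norm_square)

lemma ip_swap: "ip n b a = cnj (ip n a b)"
  unfolding ip_def by (simp add: mult.commute)

lemma nrm2_nonneg: "0 \<le> nrm2 n a"
  unfolding nrm2_def by (simp add: sum_nonneg)

lemma sqrt_prod: "sqrt (prod f A) = (\<Prod>x\<in>A. sqrt (f x))"
  by (induction A rule: infinite_finite_induct) (simp_all add: real_sqrt_mult)

lemma hadamard_orth:
  assumes orth: "\<And>i l. i < n \<Longrightarrow> l < n \<Longrightarrow> i \<noteq> l \<Longrightarrow> ip n (f i) (f l) = 0"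
  shows "cmod (det (mat n n (\<lambda>(i,j). f i j))) = (\<Prod>i<n. sqrt (nrm2 n (f i)))"
proof -
  define A where "A = mat n n (\<lambda>(i,j). f i j)"
  define B where "B = A * transpose_mat (map_mat cnj A)"
  have A: "A \<in> carrier_mat n n" unfolding A_def by simp
  have AH: "transpose_mat (map_mat cnj A) \<in> carrier_mat n n" using A by simp
  have Bij: "B $$ (i,l) = ip n (f i) (f l)" if "i < n" "l < n" for i l
    using that unfolding B_def A_def ip_def
    by (simp add: scalar_prod_def row_def col_def atLeast0LessThan)
  have Bc: "B \<in> carrier_mat n n" unfolding B_def using A by simp
  have ut: "upper_triangular B"
    by (rule upper_triangularI) (use Bij orth Bc in auto)
  have "det B = prod_list (diag_mat B)" by (rule det_upper_triangular[OF ut Bc])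
  also have "\<dots> = (\<Prod>i = 0..<n. B $$ (i,i))" using Bc by (simp add: prod_list_diag_prod)
  also have "\<dots> = (\<Prod>i<n. complex_of_real (nrm2 n (f i)))"
    by (rule prod.cong) (auto simp: Bij ip_self atLeast0LessThan)
  finally have dB: "det B = complex_of_real (\<Prod>i<n. nrm2 n (f i))" by simp
  have "det B = det A * det (transpose_mat (map_mat cnj A))" unfolding B_def by (rule det_mult[OF A AH])
  also have "det (transpose_mat (map_mat cnj A)) = cnj (det A)"
    using det_transpose[of "map_mat cnj A" n] A by (simp add: det_cnj)
  finally have "det B = det A * cnj (det A)" .
  then have "complex_of_real ((cmod (det A))^2) = complex_of_real (\<Prod>i<n. nrm2 n (f i))"
    using dB complex_norm_square[of "det A"] by simp
  then have "(cmod (det A))^2 = (\<Prod>i<n. nrm2 n (f i))" using of_real_eq_iff by blast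
  then have "cmod (det A) = sqrt (\<Prod>i<n. nrm2 n (f i))" by (metis norm_ge_zero real_sqrt_unique)
  then show ?thesis unfolding A_def by (simp add: sqrt_prod)
qed

lemma det_add_comb:
  assumes k: "k < n" and L: "finite L" "L \<subseteq> {..<n} - {k}"
  shows "det (mat n n (\<lambda>(i,j). if i = k then f k j + (\<Sum>l\<in>L. c l * f l j) else f i j)) =
         det (mat n n (\<lambda>(i,j). f i j))"
  using L
proof (induction L rule: finite_induct)
  case empty
  have "mat n n (\<lambda>(i,j). if i = k then f k j + (\<Sum>l\<in>{}. c l * f l j) else f i j) = mat n n (\<lambda>(i,j). f i j)"
    by (rule eq_matI) auto
  then show ?case by simp
next
  case (insert x F)
  define M where "M = mat n n (\<lambda>(i,j). if i = k then f k j + (\<Sum>l\<in>F. c l * f l j) else f i j)"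
  have x: "x < n" "x \<noteq> k" using insert.prems by auto
  have "mat n n (\<lambda>(i,j). if i = k then f k j + (\<Sum>l\<in>insert x F. c l * f l j) else f i j) = addrow (c x) k x M"
    unfolding M_def mat_addrow_def using insert.hyps x by (intro eq_matI) (auto simp: algebra_simps)
  also have "det \<dots> = det M" by (rule det_addrow[OF x(1)]) (use x M_def in auto)
  also have "\<dots> = det (mat n n (\<lambda>(i,j). f i j))" unfolding M_def by (rule insert.IH) (use insert.prems in auto)
  finally show ?case .
qed

lemma ip_add_left: "ip n (\<lambda>j. a j + b j) x = ip n a x + ip n b x"
  unfolding ip_def by (simp add: distrib_right sum.distrib)

lemma ip_add_right: "ip n x (\<lambda>j. a j + b j) = ip n x a + ip n x b"
  unfolding ip_def by (simp add: distrib_left sum.distrib)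

lemma ip_sum_left: "ip n (\<lambda>j. \<Sum>l\<in>L. d l * b l j) x = (\<Sum>l\<in>L. d l * ip n (b l) x)"
  unfolding ip_def by (simp add: sum_distrib_left sum_distrib_right mult.assoc sum.swap[of _ L])

lemma ip_sum_right: "ip n a (\<lambda>j. \<Sum>l\<in>L. d l * b l j) = (\<Sum>l\<in>L. cnj (d l) * ip n a (b l))"
  unfolding ip_def by (simp add: cnj_sum sum_distrib_left sum_distrib_right mult.assoc mult.left_commute sum.swap[of _ L])

lemma nrm2_zero_ip: "nrm2 n a = 0 \<Longrightarrow> ip n b a = 0"
proof -
  assume "nrm2 n a = 0"
  then have "\<forall>j\<in>{..<n}. (cmod (a j))^2 = 0" unfolding nrm2_def
    by (subst sum_nonneg_eq_0_iff[symmetric]) auto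
  then show ?thesis unfolding ip_def by simp
qed

lemma hadamard_aux:
  "\<forall>f. (\<forall>i l. i < n - m \<longrightarrow> l < n - m \<longrightarrow> i \<noteq> l \<longrightarrow> ip n (f i) (f l) = 0) \<longrightarrow>
     cmod (det (mat n n (\<lambda>(i,j). f i j))) \<le> (\<Prod>i<n. sqrt (nrm2 n (f i)))"
proof (induction m)
  case 0
  show ?case using hadamard_orth by auto
next
  case (Suc m)
  show ?case
  proof (cases "n - Suc m = n - m")
    case True then show ?thesis using Suc.IH by simp
  next
    case False
    define k where "k = n - Suc m"
    have k: "k < n" "n - m = Suc k" using False unfolding k_def by auto
    show ?thesis
    proof (intro allI impI)
      fix f :: "nat \<Rightarrow> nat \<Rightarrow> complex"
      assume orth: "\<forall>i l. i < n - Suc m \<longrightarrow> l < n - Suc m \<longrightarrow> i \<noteq> l \<longrightarrow> ip n (f i) (f l) = 0"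
      then have orth': "ip n (f i) (f l) = 0" if "i < k" "l < k" "i \<noteq> l" for i l
        using that unfolding k_def by auto
      define c where "c l = ip n (f k) (f l) / ip n (f l) (f l)" for l
      define u where "u j = (\<Sum>l\<in>{..<k}. c l * f l j)" for j
      define gk where "gk j = f k j + (\<Sum>l\<in>{..<k}. (- c l) * f l j)" for j
      define g where "g i = (if i = k then gk else f i)" for i
      have det_eq: "det (mat n n (\<lambda>(i,j). g i j)) = det (mat n n (\<lambda>(i,j). f i j))"
      proof -
        have "mat n n (\<lambda>(i,j). g i j) = mat n n (\<lambda>(i,j). if i = k then f k j + (\<Sum>l\<in>{..<k}. (- c l) * f l j) else f i j)"
          by (rule eq_matI) (auto simp: g_def gk_def)
        also have "det \<dots> = det (mat n n (\<lambda>(i,j). f i j))"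
          by (rule det_add_comb) (use k in auto)
        finally show ?thesis .
      qed
      have gk_orth: "ip n gk (f l) = 0" if l: "l < k" for l
      proof -
        have "ip n gk (f l) = ip n (f k) (f l) + (\<Sum>l'\<in>{..<k}. (- c l') * ip n (f l') (f l))"
          unfolding gk_def ip_add_left ip_sum_left ..
        also have "(\<Sum>l'\<in>{..<k}. (- c l') * ip n (f l') (f l)) = (- c l) * ip n (f l) (f l)"
          by (subst sum.remove[of "{..<k}" l]) (use l orth' in \<open>auto intro!: sum.neutral\<close>)
        finally have eq: "ip n gk (f l) = ip n (f k) (f l) - c l * ip n (f l) (f l)" by simp
        show ?thesis
        proof (cases "ip n (f l) (f l) = 0")
          case True
          then have "nrm2 n (f l) = 0" by (simp add: ip_self)
          then have "ip n (f k) (f l) = 0" by (rule nrm2_zero_ip)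
          then show ?thesis using eq True by simp
        next
          case False
          then show ?thesis using eq unfolding c_def by simp
        qed
      qed
      have g_orth: "\<forall>i l. i < n - m \<longrightarrow> l < n - m \<longrightarrow> i \<noteq> l \<longrightarrow> ip n (g i) (g l) = 0"
      proof (intro allI impI)
        fix i l assume "i < n - m" "l < n - m" "i \<noteq> l"
        then have il: "i \<le> k" "l \<le> k" "i \<noteq> l" using k by auto
        show "ip n (g i) (g l) = 0"
        proof (cases "i = k")
          case True
          then show ?thesis using il gk_orth[of l] by (simp add: g_def)
        next
          case False
          show ?thesis
          proof (cases "l = k")
            case True
            then have "ip n (g i) (g l) = cnj (ip n gk (f i))" using False ip_swap[of n "f i" gk] by (simp add: g_def)
            then show ?thesis using gk_orth[of i] il False True by simp
          next
            case False2: False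
            then show ?thesis using False il orth' by (simp add: g_def)
          qed
        qed
      qed
      have fk: "f k = (\<lambda>j. gk j + u j)"
        by (rule ext) (simp add: gk_def u_def sum_negf)
      have ip_gu: "ip n gk u = 0"
      proof -
        have "ip n gk u = (\<Sum>l\<in>{..<k}. cnj (c l) * ip n gk (f l))"
          unfolding u_def by (rule ip_sum_right)
        also have "\<dots> = 0" by (rule sum.neutral) (simp add: gk_orth)
        finally show ?thesis .
      qed
      have "complex_of_real (nrm2 n (f k)) = ip n (\<lambda>j. gk j + u j) (\<lambda>j. gk j + u j)"
        by (simp add: ip_self fk)
      also have "\<dots> = ip n gk gk + ip n u u + ip n gk u + ip n u gk"
        by (simp add: ip_add_left ip_add_right)
      also have "\<dots> = complex_of_real (nrm2 n gk + nrm2 n u)"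
        using ip_gu ip_swap[of n u gk] by (simp add: ip_self)
      finally have "nrm2 n (f k) = nrm2 n gk + nrm2 n u" using of_real_eq_iff by blast
      then have nk: "nrm2 n gk \<le> nrm2 n (f k)" using nrm2_nonneg[of n u] by simp
      have "cmod (det (mat n n (\<lambda>(i,j). f i j))) = cmod (det (mat n n (\<lambda>(i,j). g i j)))"
        using det_eq by simp
      also have "\<dots> \<le> (\<Prod>i<n. sqrt (nrm2 n (g i)))" using Suc.IH g_orth by blast
      also have "\<dots> \<le> (\<Prod>i<n. sqrt (nrm2 n (f i)))"
        by (rule prod_mono) (auto simp: g_def nk nrm2_nonneg)
      finally show "cmod (det (mat n n (\<lambda>(i,j). f i j))) \<le> (\<Prod>i<n. sqrt (nrm2 n (f i)))" .
    qed
  qed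
qed

lemma hadamard:
  "cmod (det (mat n n (\<lambda>(i,j). f i j))) \<le> (\<Prod>i<n. sqrt (nrm2 n (f i)))"
  using hadamard_aux[of n n] by simp



lemma choose_fact_le_nat: "(k choose s) * fact s \<le> (k::nat) ^ s"
proof (cases "s \<le> k")
  case True
  have "fact s * fact (k - s) * (k choose s) = (fact k :: nat)" using binomial_fact_lemma[OF True] .
  then have "(k choose s) * fact s = fact k div fact (k - s)"
    by (metis mult.commute nonzero_mult_div_cancel_right fact_nonzero mult.assoc)
  also have "\<dots> \<le> k ^ s" by (rule fact_div_fact_le_pow[OF True])
  finally show ?thesis .
next
  case False then show ?thesis by (simp add: binomial_eq_0)
qed

lemma choose_le_real: "real (k choose s) \<le> real k ^ s / fact s"
proof -
  have "real ((k choose s) * fact s) \<le> real (k ^ s)"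
    using choose_fact_le_nat[of k s] by linarith
  then have "real (k choose s) * fact s \<le> real k ^ s" by simp
  then show ?thesis by (simp add: field_simps)
qed

lemma bern_nat: "real n ^ (m + 1) + real (m + 1) * real n ^ m \<le> (real n + 1) ^ (m + 1)"
proof (induction m)
  case 0 then show ?case by simp
next
  case (Suc m)
  have n0: "0 \<le> real n" by simp
  have "(real n + 1) ^ (Suc m + 1) = (real n + 1) * (real n + 1) ^ (m + 1)" by simp
  also have "\<dots> \<ge> (real n + 1) * (real n ^ (m + 1) + real (m + 1) * real n ^ m)"
    by (intro mult_left_mono Suc.IH) simp
  finally have "(real n + 1) * (real n ^ (m + 1) + real (m + 1) * real n ^ m) \<le> (real n + 1) ^ (Suc m + 1)" .
  moreover have "real n ^ (Suc m + 1) + real (Suc m + 1) * real n ^ Suc m \<le> (real n + 1) * (real n ^ (m + 1) + real (m + 1) * real n ^ m)"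
    using n0 by (simp add: algebra_simps)
  ultimately show ?case by linarith
qed

lemma sum_pow_le: "(\<Sum>k<n. real k ^ m) * real (m + 1) \<le> real n ^ (m + 1)"
proof (induction n)
  case 0 then show ?case by simp
next
  case (Suc n)
  have "(\<Sum>k<Suc n. real k ^ m) * real (m + 1) = (\<Sum>k<n. real k ^ m) * real (m + 1) + real (m + 1) * real n ^ m"
    by (simp add: algebra_simps)
  also have "\<dots> \<le> real n ^ (m + 1) + real (m + 1) * real n ^ m" using Suc.IH by simp
  also have "\<dots> \<le> (real n + 1) ^ (m + 1)" by (rule bern_nat)
  finally show ?case by (simp add: add.commute)
qed

lemma three_pow_le: "(3::real) ^ s \<le> real (2 * s + 1) * (fact s) ^ 2"
proof (induction s)
  case 0 then show ?case by simp
next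
  case (Suc s)
  have f: "(fact (Suc s) :: real) = real (Suc s) * fact s" by simp
  have "(3::real) ^ Suc s = 3 * 3 ^ s" by simp
  also have "\<dots> \<le> 3 * (real (2 * s + 1) * (fact s) ^ 2)" using Suc.IH by simp
  also have "\<dots> \<le> real (2 * Suc s + 1) * (real (Suc s))^2 * (fact s) ^ 2"
  proof -
    have "3 * real (2 * s + 1) \<le> real (2 * Suc s + 1) * (real (Suc s))^2"
      by (simp add: power2_eq_square algebra_simps)
    moreover have "(0::real) \<le> (fact s)^2" by simp
    ultimately show ?thesis by (metis mult.assoc mult_right_mono)
  qed
  also have "\<dots> = real (2 * Suc s + 1) * (fact (Suc s)) ^ 2"
    unfolding f by (simp add: power_mult_distrib)
  finally show ?case .
qed

lemma binom_sq_sum: "(\<Sum>k<n. (real (k choose s))^2) \<le> real n ^ (2 * s + 1) / 3 ^ s"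
proof -
  have fpos: "(0::real) < fact s" by simp
  have "(\<Sum>k<n. (real (k choose s))^2) \<le> (\<Sum>k<n. (real k ^ s / fact s)^2)"
    by (intro sum_mono power_mono choose_le_real) simp
  also have "\<dots> = (\<Sum>k<n. real k ^ (2 * s)) / (fact s)^2"
    by (simp add: power_divide power_mult[symmetric] sum_divide_distrib mult.commute)
  also have "\<dots> \<le> real n ^ (2 * s + 1) / real (2 * s + 1) / (fact s)^2"
  proof -
    have "(\<Sum>k<n. real k ^ (2 * s)) \<le> real n ^ (2 * s + 1) / real (2 * s + 1)"
    proof -
      have "0 < real (2 * s + 1)" by simp
      show ?thesis by (subst pos_le_divide_eq[OF \<open>0 < real (2 * s + 1)\<close>]) (rule sum_pow_le)
    qed
    then show ?thesis by (intro divide_right_mono) simp_all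
  qed
  also have "\<dots> = real n ^ (2 * s + 1) / (real (2 * s + 1) * (fact s)^2)" by simp
  also have "\<dots> \<le> real n ^ (2 * s + 1) / 3 ^ s"
    by (intro divide_left_mono three_pow_le) simp_all
  finally show ?thesis .
qed



lemma poly_sum_lt:
  fixes p :: "complex poly"
  assumes "degree p < n"
  shows "poly p x = (\<Sum>j<n. coeff p j * x ^ j)"
proof -
  have "poly p x = (\<Sum>j\<le>degree p. coeff p j * x ^ j)" by (rule poly_altdef)
  also have "\<dots> = (\<Sum>j<n. coeff p j * x ^ j)"
    by (rule sum.mono_neutral_left) (use assms in \<open>auto simp: coeff_eq_0\<close>)
  finally show ?thesis .
qed

definition pp :: "(nat \<Rightarrow> complex) \<Rightarrow> nat \<Rightarrow> complex poly" where
  "pp w k = (\<Prod>l<k. [:- w l, 1:])"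

lemma poly_pp: "poly (pp w k) x = (\<Prod>l<k. x - w l)"
  unfolding pp_def by (simp add: poly_prod)

lemma degree_pp: "degree (pp w k) = k"
  unfolding pp_def by (subst degree_prod_eq_sum_degree) auto

lemma lead_pp: "coeff (pp w k) k = 1"
proof -
  have "lead_coeff (pp w k) = 1" unfolding pp_def by (simp add: lead_coeff_prod)
  then show ?thesis by (simp add: degree_pp)
qed

lemma norm_prod_list_map: "cmod (\<Prod>j\<leftarrow>xs. f j) = (\<Prod>j\<leftarrow>xs. cmod (f j))"
  by (induction xs) (simp_all add: norm_mult)

lemma core_det:
  fixes w :: "nat \<Rightarrow> complex" and T :: "nat \<Rightarrow> nat list"
  assumes inj: "inj_on w {..<n}"
    and T: "\<And>i. i < n \<Longrightarrow> distinct (T i) \<and> set (T i) \<subseteq> {..<i}"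
    and mono: "\<And>i j. i < n \<Longrightarrow> j \<in> set (T i) \<Longrightarrow> cmod (w j) \<le> cmod (w i)"
  shows "(\<Prod>i<n. (\<Prod>l<i. cmod (w i - w l)) / (\<Prod>j\<leftarrow>T i. cmod (w i - w j)))
      \<le> (\<Prod>i<n. max 1 (cmod (w i)) ^ (n - 1) * sqrt (real n ^ (2 * length (T i) + 1) / 3 ^ length (T i)))"
proof -
  define pts where "pts i = w i # map w (T i)" for i
  define N where "N i k = dd (pts i) (\<lambda>z. z ^ k)" for i k
  define C where "C = mat n n (\<lambda>(j,k). coeff (pp w k) j)"
  define NM where "NM = mat n n (\<lambda>(i,k). N i k)"
  have pts_dist: "distinct (pts i)" if "i < n" for i
  proof -
    have "w i \<notin> w ` set (T i)"
    proof
      assume "w i \<in> w ` set (T i)"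
      then obtain j where "j \<in> set (T i)" "w i = w j" by auto
      moreover have "j < i" using T[OF that] \<open>j \<in> set (T i)\<close> by auto
      ultimately show False using inj that unfolding inj_on_def by force
    qed
    moreover have "inj_on w (set (T i))" by (rule inj_on_subset[OF inj]) (use T[OF that] that in auto)
    ultimately show ?thesis unfolding pts_def using T[OF that] by (simp add: distinct_map)
  qed
  have pts_set: "set (pts i) = w ` ({i} \<union> set (T i))" for i unfolding pts_def by auto
  have C: "C \<in> carrier_mat n n" unfolding C_def by simp
  have NM: "NM \<in> carrier_mat n n" unfolding NM_def by simp
  have prodE: "(NM * C) $$ (i,k) = dd (pts i) (poly (pp w k))" if "i < n" "k < n" for i k
  proof -
    have "(NM * C) $$ (i,k) = (\<Sum>j<n. N i j * coeff (pp w k) j)"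
      using that unfolding NM_def C_def by (simp add: scalar_prod_def row_def col_def atLeast0LessThan)
    also have "\<dots> = dd (pts i) (\<lambda>z. \<Sum>j<n. coeff (pp w k) j * z ^ j)"
      unfolding N_def dd_sum dd_cmult by (simp add: mult.commute)
    also have "\<dots> = dd (pts i) (poly (pp w k))"
      using that by (intro dd_cong) (simp add: poly_sum_lt degree_pp)
    finally show ?thesis .
  qed
  have lowtri: "(NM * C) $$ (i,k) = 0" if "i < k" "k < n" for i k
  proof -
    have "dd (pts i) (poly (pp w k)) = 0"
    proof (rule dd_vanish)
      fix z assume "z \<in> set (pts i)"
      then obtain l where "l \<in> {i} \<union> set (T i)" "z = w l" unfolding pts_set by auto
      then have "l < k" "z = w l" using T[of i] that by auto
      then show "poly (pp w k) z = 0" unfolding poly_pp by (auto intro: prod_zero)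
    qed
    then show ?thesis using prodE that by simp
  qed
  have diagE: "(NM * C) $$ (i,i) = (\<Prod>l<i. w i - w l) / (\<Prod>j\<leftarrow>T i. w i - w j)" if "i < n" for i
  proof -
    have "dd (pts i) (poly (pp w i)) = poly (pp w i) (w i) / (\<Prod>y\<leftarrow>map w (T i). w i - y)"
      unfolding pts_def
    proof (rule dd_diag)
      show "distinct (w i # map w (T i))" using pts_dist[OF that] unfolding pts_def .
      fix y assume "y \<in> set (map w (T i))"
      then obtain j where "j \<in> set (T i)" "y = w j" by auto
      then have "j < i" "y = w j" using T[OF that] by auto
      then show "poly (pp w i) y = 0" unfolding poly_pp by (auto intro: prod_zero)
    qed
    then show ?thesis using prodE[OF that that] by (simp add: poly_pp comp_def)
  qed
  have "det (NM * C) = prod_list (diag_mat (NM * C))"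
    by (rule det_lower_triangular[of n]) (use lowtri NM C in auto)
  also have "\<dots> = (\<Prod>i=0..<n. (NM * C) $$ (i,i))"
  proof -
    have dimr: "dim_row (NM * C) = n" using NM by simp
    show ?thesis by (simp only: prod_list_diag_prod dimr)
  qed
  also have "\<dots> = (\<Prod>i=0..<n. (\<Prod>l<i. w i - w l) / (\<Prod>j\<leftarrow>T i. w i - w j))"
    by (rule prod.cong[OF refl], rule diagE) simp
  also have "\<dots> = (\<Prod>i<n. (\<Prod>l<i. w i - w l) / (\<Prod>j\<leftarrow>T i. w i - w j))"
    by (simp only: atLeast0LessThan)
  finally have d1: "det (NM * C) = (\<Prod>i<n. (\<Prod>l<i. w i - w l) / (\<Prod>j\<leftarrow>T i. w i - w j))" .
  have detC: "det C = 1"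
  proof -
    have ut: "upper_triangular C"
      by (rule upper_triangularI) (use C in \<open>auto simp: C_def coeff_eq_0 degree_pp\<close>)
    have "det C = prod_list (diag_mat C)" by (rule det_upper_triangular[OF ut C])
    also have "\<dots> = 1" using C by (simp add: prod_list_diag_prod C_def lead_pp)
    finally show ?thesis .
  qed
  have "det (NM * C) = det NM" using det_mult[OF NM C] detC by simp
  then have "cmod (det NM) = cmod (\<Prod>i<n. (\<Prod>l<i. w i - w l) / (\<Prod>j\<leftarrow>T i. w i - w j))"
    using d1 by simp
  then have eqd: "cmod (det NM) = (\<Prod>i<n. (\<Prod>l<i. cmod (w i - w l)) / (\<Prod>j\<leftarrow>T i. cmod (w i - w j)))"
    by (simp only: prod_norm[symmetric] norm_divide norm_prod_list_map)
  have hd: "cmod (det NM) \<le> (\<Prod>i<n. sqrt (nrm2 n (N i)))"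
    unfolding NM_def by (rule hadamard)
  have rowb: "sqrt (nrm2 n (N i)) \<le> max 1 (cmod (w i)) ^ (n - 1) * sqrt (real n ^ (2 * length (T i) + 1) / 3 ^ length (T i))"
    if i: "i < n" for i
  proof -
    define R where "R = max 1 (cmod (w i))"
    define s where "s = length (T i)"
    have R1: "1 \<le> R" unfolding R_def by simp
    have ent: "cmod (N i k) \<le> real (k choose s) * R ^ (n - 1)" if k: "k < n" for k
    proof -
      have "cmod (N i k) \<le> real (k choose length (map w (T i))) * R ^ (k - length (map w (T i)))"
        unfolding N_def pts_def
      proof (rule dd_pow_bound)
        show "distinct (w i # map w (T i))" using pts_dist[OF i] unfolding pts_def .
        fix z assume "z \<in> set (w i # map w (T i))"
        then show "cmod z \<le> R" unfolding R_def using mono[OF i] by (force intro: le_max_iff_disj[THEN iffD2])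
      qed (use R1 in auto)
      also have "\<dots> \<le> real (k choose s) * R ^ (n - 1)"
        unfolding s_def length_map using R1 k by (intro mult_left_mono power_increasing) auto
      finally show ?thesis .
    qed
    have "nrm2 n (N i) \<le> (\<Sum>k<n. (real (k choose s) * R ^ (n - 1))^2)"
      unfolding nrm2_def by (intro sum_mono power_mono ent) auto
    also have "\<dots> = (R ^ (n - 1))^2 * (\<Sum>k<n. (real (k choose s))^2)"
      by (simp add: power_mult_distrib sum_distrib_left mult.commute)
    also have "\<dots> \<le> (R ^ (n - 1))^2 * (real n ^ (2 * s + 1) / 3 ^ s)"
      by (intro mult_left_mono binom_sq_sum) simp
    finally have "sqrt (nrm2 n (N i)) \<le> sqrt ((R ^ (n - 1))^2 * (real n ^ (2 * s + 1) / 3 ^ s))"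
      by (rule real_sqrt_le_mono)
    also have "\<dots> = R ^ (n - 1) * sqrt (real n ^ (2 * s + 1) / 3 ^ s)"
      using R1 by (simp only: real_sqrt_mult real_sqrt_abs abs_of_nonneg) simp
    finally show ?thesis unfolding R_def s_def .
  qed
  have "(\<Prod>i<n. sqrt (nrm2 n (N i))) \<le> (\<Prod>i<n. max 1 (cmod (w i)) ^ (n - 1) * sqrt (real n ^ (2 * length (T i) + 1) / 3 ^ length (T i)))"
    by (rule prod_mono) (use rowb nrm2_nonneg in auto)
  then show ?thesis using eqd hd by simp
qed



lemma root_list_prop: "P = Polynomial.smult (lead_coeff P) (\<Prod>x\<leftarrow>root_list P. [:- x, 1:])"
proof -
  have "\<exists>xs. P = Polynomial.smult (lead_coeff P) (\<Prod>x\<leftarrow>xs. [:- x, 1:])"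
  proof -
    obtain roots where roots: "mset roots = proots P" using ex_mset by blast
    have "P = Polynomial.smult (lead_coeff P) (\<Prod>x\<in>#proots P. [:-x, 1:])"
      by (rule complex_poly_decompose_multiset [symmetric])
    also have "(\<Prod>x\<in>#proots P. [:-x, 1:]) = (\<Prod>x\<leftarrow>roots. [:-x, 1:])"
      by (subst prod_mset_prod_list [symmetric]) (simp add: roots[symmetric])
    finally show ?thesis by blast
  qed
  then show ?thesis unfolding root_list_def by (rule someI_ex)
qed

lemma lin_prod: "(\<Prod>x\<leftarrow>xs. [:- x, 1::complex:]) \<noteq> 0 \<and> degree (\<Prod>x\<leftarrow>xs. [:- x, 1::complex:]) = length xs"
proof (induction xs)
  case Nil then show ?case by simp
next
  case (Cons a xs)
  define q where "q = (\<Prod>x\<leftarrow>xs. [:- x, 1::complex:])"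
  have q: "q \<noteq> 0" "degree q = length xs" using Cons unfolding q_def by auto
  have eq: "(\<Prod>x\<leftarrow>a # xs. [:- x, 1::complex:]) = [:- a, 1:] * q" unfolding q_def by simp
  have d: "degree ([:- a, 1:] * q) = degree [:- a, 1::complex:] + degree q"
    by (rule degree_mult_eq) (use q in auto)
  have nz: "[:- a, 1:] * q \<noteq> 0" using q(1) no_zero_divisors[of "[:- a, 1::complex:]" q] by force
  show ?case unfolding eq using d q nz by (simp del: mult_pCons_left)
qed

lemma poly_lin_prod: "poly (\<Prod>x\<leftarrow>xs. [:- x, 1::complex:]) z = (\<Prod>x\<leftarrow>xs. z - x)"
  by (induction xs) (simp_all add: algebra_simps)

lemma prod_lt_gt:
  fixes h :: "'a::linorder \<Rightarrow> 'a \<Rightarrow> real"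
  assumes "\<And>i j. h i j = h j i"
  shows "(\<Prod>(i,j)\<in>{(i,j). i\<in>A \<and> j\<in>A \<and> i<j}. h i j) = (\<Prod>(i,j)\<in>{(i,j). i\<in>A \<and> j\<in>A \<and> j<i}. h i j)"
  by (rule prod.reindex_bij_witness[of _ prod.swap prod.swap]) (auto simp: assms)

lemma prod_offd:
  fixes h :: "'a::linorder \<Rightarrow> 'a \<Rightarrow> real"
  assumes A: "finite A" and sym: "\<And>i j. h i j = h j i"
  shows "(\<Prod>(i,j)\<in>{(i,j). i\<in>A \<and> j\<in>A \<and> i\<noteq>j}. h i j) = (\<Prod>(i,j)\<in>{(i,j). i\<in>A \<and> j\<in>A \<and> i<j}. h i j)^2"
proof -
  let ?lt = "{(i,j). i\<in>A \<and> j\<in>A \<and> i<j}" and ?gt = "{(i,j). i\<in>A \<and> j\<in>A \<and> j<i}"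
  have fin: "finite ?lt" "finite ?gt"
    by (rule finite_subset[of _ "A \<times> A"], auto simp: A)+
  have "{(i,j). i\<in>A \<and> j\<in>A \<and> i\<noteq>j} = ?lt \<union> ?gt" by auto
  then have "(\<Prod>(i,j)\<in>{(i,j). i\<in>A \<and> j\<in>A \<and> i\<noteq>j}. h i j) = (\<Prod>(i,j)\<in>?lt \<union> ?gt. h i j)"
    by simp
  also have "\<dots> = (\<Prod>(i,j)\<in>?lt. h i j) * (\<Prod>(i,j)\<in>?gt. h i j)"
    by (rule prod.union_disjoint) (use fin in auto)
  also have "(\<Prod>(i,j)\<in>?gt. h i j) = (\<Prod>(i,j)\<in>?lt. h i j)" using prod_lt_gt[of h A] sym by simp
  finally show ?thesis by (simp add: power2_eq_square)
qed

lemma prod_offd_reindex: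
  fixes h :: "'b \<Rightarrow> 'b \<Rightarrow> real"
  assumes "inj_on f A" "f ` A = B"
  shows "(\<Prod>(i,j)\<in>{(i,j). i\<in>A \<and> j\<in>A \<and> i\<noteq>j}. h (f i) (f j)) = (\<Prod>(u,v)\<in>{(u,v). u\<in>B \<and> v\<in>B \<and> u\<noteq>v}. h u v)"
proof -
  have bij: "bij_betw (\<lambda>(i, j). (f i, f j)) {(i,j). i\<in>A \<and> j\<in>A \<and> i\<noteq>j} {(u,v). u\<in>B \<and> v\<in>B \<and> u\<noteq>v}"
    unfolding bij_betw_def
  proof
    show "inj_on (\<lambda>(i, j). (f i, f j)) {(i,j). i\<in>A \<and> j\<in>A \<and> i\<noteq>j}"
      using assms(1) by (auto simp: inj_on_def)
    show "(\<lambda>(i, j). (f i, f j)) ` {(i,j). i\<in>A \<and> j\<in>A \<and> i\<noteq>j} = {(u,v). u\<in>B \<and> v\<in>B \<and> u\<noteq>v}"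
    proof (intro equalityI subsetI)
      fix p assume "p \<in> (\<lambda>(i, j). (f i, f j)) ` {(i,j). i\<in>A \<and> j\<in>A \<and> i\<noteq>j}"
      then show "p \<in> {(u,v). u\<in>B \<and> v\<in>B \<and> u\<noteq>v}" using assms by (auto simp: inj_on_def)
    next
      fix p assume "p \<in> {(u,v). u\<in>B \<and> v\<in>B \<and> u\<noteq>v}"
      then obtain u v where p: "p = (u,v)" "u \<in> B" "v \<in> B" "u \<noteq> v" by auto
      then obtain i j where "i \<in> A" "j \<in> A" "u = f i" "v = f j" using assms(2) by blast
      then show "p \<in> (\<lambda>(i, j). (f i, f j)) ` {(i,j). i\<in>A \<and> j\<in>A \<and> i\<noteq>j}" using p by auto
    qed
  qed
  have "prod (\<lambda>p. (\<lambda>(u,v). h u v) ((\<lambda>(i, j). (f i, f j)) p)) {(i,j). i\<in>A \<and> j\<in>A \<and> i\<noteq>j}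
      = prod (\<lambda>(u,v). h u v) {(u,v). u\<in>B \<and> v\<in>B \<and> u\<noteq>v}"
    by (rule prod.reindex_bij_betw[OF bij])
  moreover have "prod (\<lambda>p. (\<lambda>(u,v). h u v) ((\<lambda>(i, j). (f i, f j)) p)) {(i,j). i\<in>A \<and> j\<in>A \<and> i\<noteq>j}
      = (\<Prod>(i,j)\<in>{(i,j). i\<in>A \<and> j\<in>A \<and> i\<noteq>j}. h (f i) (f j))"
    by (rule prod.cong) auto
  ultimately show ?thesis by simp
qed



lemma image_eq_set:
  assumes "I \<subseteq> {0..<length xs}" "card I = card (set xs)" "inj_on (nth xs) I"
  shows "(nth xs) ` I = set xs"
proof (rule card_subset_eq)
  show "(!) xs ` I \<subseteq> set xs" using assms(1) by auto
  show "card ((!) xs ` I) = card (set xs)" using assms(2,3) by (simp add: card_image)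
qed simp

lemma sdisc_sum_bound:
  fixes xs :: "complex list"
  shows "cmod (\<Sum>I\<in>{I. I \<subseteq> {0..<length xs} \<and> card I = card (set xs)}. \<Prod>(i,j)\<in>{(i,j). i\<in>I \<and> j\<in>I \<and> i<j}. (xs!i - xs!j)^2)
   \<le> real (card {I. I \<subseteq> {0..<length xs} \<and> card I = card (set xs) \<and> inj_on (nth xs) I})
      * (\<Prod>(u,v)\<in>{(u,v). u\<in>set xs \<and> v\<in>set xs \<and> u\<noteq>v}. cmod (u - v))"
proof -
  define D where "D = (\<Prod>(u,v)\<in>{(u,v). u\<in>set xs \<and> v\<in>set xs \<and> u\<noteq>v}. cmod (u - v))"
  define II where "II = {I. I \<subseteq> {0..<length xs} \<and> card I = card (set xs)}"
  have finII: "finite II" unfolding II_def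
    by (rule finite_subset[of _ "Pow {0..<length xs}"]) auto
  have hterm: "cmod (\<Prod>(i,j)\<in>{(i,j). i\<in>I \<and> j\<in>I \<and> i<j}. (xs!i - xs!j)^2) \<le> (if inj_on (nth xs) I then D else 0)"
    if I: "I \<in> II" for I
  proof (cases "inj_on (nth xs) I")
    case True
    have IS: "I \<subseteq> {0..<length xs}" "card I = card (set xs)" using I unfolding II_def by auto
    have finI: "finite I" using IS(1) finite_subset by blast
    have img: "(nth xs) ` I = set xs" by (rule image_eq_set[OF IS True])
    have "cmod (\<Prod>(i,j)\<in>{(i,j). i\<in>I \<and> j\<in>I \<and> i<j}. (xs!i - xs!j)^2)
        = (\<Prod>(i,j)\<in>{(i,j). i\<in>I \<and> j\<in>I \<and> i<j}. cmod (xs!i - xs!j)^2)"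
      by (simp add: prod_norm[symmetric] norm_power case_prod_unfold)
    also have "\<dots> = (\<Prod>(i,j)\<in>{(i,j). i\<in>I \<and> j\<in>I \<and> i<j}. cmod (xs!i - xs!j))^2"
      by (simp add: prod_power_distrib case_prod_unfold)
    also have "\<dots> = (\<Prod>(i,j)\<in>{(i,j). i\<in>I \<and> j\<in>I \<and> i\<noteq>j}. cmod (xs!i - xs!j))"
      by (rule prod_offd[symmetric]) (use finI in \<open>auto simp: norm_minus_commute\<close>)
    also have "\<dots> = D" unfolding D_def
      by (rule prod_offd_reindex[OF True img, of "\<lambda>u v. cmod (u - v)"])
    finally show ?thesis using True by simp
  next
    case False
    then obtain i j where ij: "i \<in> I" "j \<in> I" "i \<noteq> j" "xs!i = xs!j" unfolding inj_on_def by blast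
    have finI: "finite I" using I finite_subset unfolding II_def by blast
    have fin: "finite {(i,j). i\<in>I \<and> j\<in>I \<and> i<j}"
      by (rule finite_subset[of _ "I \<times> I"]) (auto simp: finI)
    have "(\<Prod>(i,j)\<in>{(i,j). i\<in>I \<and> j\<in>I \<and> i<j}. (xs!i - xs!j)^2) = 0"
    proof (rule prod_zero[OF fin])
      show "\<exists>p\<in>{(i,j). i\<in>I \<and> j\<in>I \<and> i<j}. (case p of (i,j) \<Rightarrow> (xs!i - xs!j)^2) = 0"
        using ij by (intro bexI[of _ "(min i j, max i j)"]) (auto simp: min_def max_def)
    qed
    then show ?thesis using False by simp
  qed
  have "cmod (\<Sum>I\<in>II. \<Prod>(i,j)\<in>{(i,j). i\<in>I \<and> j\<in>I \<and> i<j}. (xs!i - xs!j)^2)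
      \<le> (\<Sum>I\<in>II. cmod (\<Prod>(i,j)\<in>{(i,j). i\<in>I \<and> j\<in>I \<and> i<j}. (xs!i - xs!j)^2))"
    by (rule norm_sum)
  also have "\<dots> \<le> (\<Sum>I\<in>II. (if inj_on (nth xs) I then D else 0))"
    by (rule sum_mono) (rule hterm)
  also have "\<dots> = (\<Sum>I\<in>{I\<in>II. inj_on (nth xs) I}. D)"
    by (rule sum.inter_filter[OF finII, symmetric])
  also have "\<dots> = real (card {I\<in>II. inj_on (nth xs) I}) * D" by simp
  also have "{I\<in>II. inj_on (nth xs) I} = {I. I \<subseteq> {0..<length xs} \<and> card I = card (set xs) \<and> inj_on (nth xs) I}"
    unfolding II_def by auto
  finally show ?thesis unfolding II_def D_def .
qed

lemma good_card:
  "card {I. I \<subseteq> {0..<length xs} \<and> card I = card (set xs) \<and> inj_on (nth xs) I}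
    \<le> (\<Prod>u\<in>set xs. card {i. i < length xs \<and> xs!i = u})"
proof -
  define F where "F u = {i. i < length xs \<and> xs!i = u}" for u
  have finF: "finite (F u)" for u unfolding F_def by simp
  have sub: "{I. I \<subseteq> {0..<length xs} \<and> card I = card (set xs) \<and> inj_on (nth xs) I}
      \<subseteq> (\<lambda>g. g ` set xs) ` (PiE (set xs) F)"
  proof
    fix I assume "I \<in> {I. I \<subseteq> {0..<length xs} \<and> card I = card (set xs) \<and> inj_on (nth xs) I}"
    then have IS: "I \<subseteq> {0..<length xs}" "card I = card (set xs)" "inj_on (nth xs) I" by auto
    have img: "(nth xs) ` I = set xs" by (rule image_eq_set[OF IS])
    define g where "g = restrict (inv_into I (nth xs)) (set xs)"
    have "g \<in> PiE (set xs) F"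
    proof
      fix u assume u: "u \<in> set xs"
      then have "inv_into I (nth xs) u \<in> I" "xs ! (inv_into I (nth xs) u) = u"
        using img by (auto intro: inv_into_into f_inv_into_f)
      then show "g u \<in> F u" using u IS(1) unfolding g_def F_def by auto
    qed (auto simp: g_def)
    moreover have "g ` set xs = I"
    proof -
      have "g ` set xs = inv_into I (nth xs) ` set xs" unfolding g_def by auto
      also have "\<dots> = inv_into I (nth xs) ` (nth xs) ` I" using img by simp
      also have "\<dots> = I" by (rule inv_into_image_cancel[OF IS(3)]) simp
      finally show ?thesis .
    qed
    ultimately show "I \<in> (\<lambda>g. g ` set xs) ` (PiE (set xs) F)" by blast
  qed
  have "card {I. I \<subseteq> {0..<length xs} \<and> card I = card (set xs) \<and> inj_on (nth xs) I}
      \<le> card ((\<lambda>g. g ` set xs) ` (PiE (set xs) F))"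
    by (rule card_mono[OF _ sub]) (simp add: finite_PiE finF)
  also have "\<dots> \<le> card (PiE (set xs) F)" by (rule card_image_le) (simp add: finite_PiE finF)
  also have "\<dots> = (\<Prod>u\<in>set xs. card (F u))" by (rule card_PiE) simp
  finally show ?thesis unfolding F_def .
qed

lemma cube_le_3pow: "(m::nat) ^ 3 \<le> 3 ^ m"
proof (induction m rule: less_induct)
  case (less m)
  show ?case
  proof (cases "m \<le> 3")
    case True
    then have "m = 0 \<or> m = 1 \<or> m = 2 \<or> m = 3" by auto
    then show ?thesis by auto
  next
    case False
    then obtain k where k: "m = Suc k" "k \<ge> 3" by (cases m) auto
    have "k ^ 3 \<le> 3 ^ k" using less k by simp
    have "(Suc k) ^ 3 \<le> 3 * k ^ 3"
    proof -
      have e3: "k^3 = k * k^2" by (simp add: eval_nat_numeral)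
      have a: "3 * k^2 \<le> k^3" unfolding e3 using k by simp
      have "3 * k + 1 \<le> 4 * k" using k by simp
      also have "4 * k \<le> k * k * k"
      proof -
        have "4 \<le> k * k" using k mult_le_mono[of 3 k 3 k] by simp
        then show ?thesis by simp
      qed
      finally have b: "3 * k + 1 \<le> k^3" by (simp add: power3_eq_cube)
      have "(Suc k) ^ 3 = k^3 + 3 * k^2 + 3 * k + 1"
        by (simp add: power3_eq_cube power2_eq_square algebra_simps)
      then show ?thesis using a b by linarith
    qed
    then show ?thesis using \<open>k ^ 3 \<le> 3 ^ k\<close> k by simp
  qed
qed

lemma cube_le_9pow: "1 \<le> (m::nat) \<Longrightarrow> m ^ 3 \<le> 9 ^ (m - 1)"
proof (induction m rule: dec_induct)
  case base then show ?case by simp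
next
  case (step k)
  have "(Suc k) ^ 3 \<le> 8 * k ^ 3"
  proof -
    have "Suc k \<le> 2 * k" using step by simp
    then have "(Suc k) ^ 3 \<le> (2 * k) ^ 3" by (rule power_mono) simp
    then show ?thesis by (simp add: power_mult_distrib)
  qed
  also have "\<dots> \<le> 9 * 9 ^ (k - 1)" using step.IH by simp
  also have "\<dots> = 9 ^ (Suc k - 1)" using step by (cases k) auto
  finally show ?case .
qed

lemma mult_sum:
  "(\<Sum>u\<in>set xs. card {i. i < length xs \<and> xs!i = u}) = length xs"
proof -
  have "(\<Sum>u\<in>set xs. card {i. i < length xs \<and> xs!i = u}) = (\<Sum>u\<in>set xs. sum (\<lambda>_. 1) {i\<in>{0..<length xs}. xs!i = u})"
    by (rule sum.cong) auto
  also have "\<dots> = sum (\<lambda>_. 1) {0..<length xs}"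
    by (rule sum.group) auto
  finally show ?thesis by simp
qed

lemma mult_pos: "u \<in> set xs \<Longrightarrow> 1 \<le> card {i. i < length xs \<and> xs!i = u}"
proof -
  assume "u \<in> set xs"
  then obtain i where "i < length xs" "xs!i = u" by (auto simp: in_set_conv_nth)
  then have "{i. i < length xs \<and> xs!i = u} \<noteq> {}" by auto
  then show ?thesis by (simp add: Suc_leI card_gt_0_iff)
qed

lemma mult_prod_bounds:
  "(\<Prod>u\<in>set xs. card {i. i < length xs \<and> xs!i = u}) ^ 3 \<le> 3 ^ length xs"
  "(\<Prod>u\<in>set xs. card {i. i < length xs \<and> xs!i = u}) ^ 3 \<le> 9 ^ (length xs - card (set xs))"
proof -
  define m where "m u = card {i. i < length xs \<and> xs!i = u}" for u
  have "(\<Prod>u\<in>set xs. m u) ^ 3 = (\<Prod>u\<in>set xs. m u ^ 3)" by (simp add: prod_power_distrib)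
  also have "\<dots> \<le> (\<Prod>u\<in>set xs. 3 ^ m u)" by (rule prod_mono) (simp add: cube_le_3pow)
  also have "\<dots> = 3 ^ (\<Sum>u\<in>set xs. m u)" by (simp add: power_sum)
  also have "\<dots> = 3 ^ length xs" unfolding m_def mult_sum ..
  finally show "(\<Prod>u\<in>set xs. card {i. i < length xs \<and> xs!i = u}) ^ 3 \<le> 3 ^ length xs" unfolding m_def .
  have "(\<Prod>u\<in>set xs. m u) ^ 3 = (\<Prod>u\<in>set xs. m u ^ 3)" by (simp add: prod_power_distrib)
  also have "\<dots> \<le> (\<Prod>u\<in>set xs. 9 ^ (m u - 1))"
    by (rule prod_mono) (use cube_le_9pow[OF mult_pos] in \<open>auto simp: m_def\<close>)
  also have "\<dots> = 9 ^ (\<Sum>u\<in>set xs. (m u - 1))" by (simp add: power_sum)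
  also have "(\<Sum>u\<in>set xs. (m u - 1)) = (\<Sum>u\<in>set xs. m u) - (\<Sum>u\<in>set xs. 1)"
    by (rule sum_subtractf_nat) (use mult_pos in \<open>auto simp: m_def\<close>)
  also have "\<dots> = length xs - card (set xs)" unfolding m_def mult_sum by simp
  finally show "(\<Prod>u\<in>set xs. card {i. i < length xs \<and> xs!i = u}) ^ 3 \<le> 9 ^ (length xs - card (set xs))"
    unfolding m_def .
qed



lemma edge_length_pair: "edge_length {u, v} = cmod (u - v)"
  unfolding edge_length_def
  by (rule the_equality) (auto simp: doubleton_eq_iff norm_minus_commute)

lemma edges_lemma:
  fixes w :: "nat \<Rightarrow> complex"
  assumes inj: "inj_on w {..<r}"
    and E: "E \<subseteq> {{u, v} | u v. u \<in> w ` {..<r} \<and> v \<in> w ` {..<r} \<and> u \<noteq> v}"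
  shows "card E = (\<Sum>i<r. length (filter (\<lambda>j. {w i, w j} \<in> E) [0..<i]))"
    and "(\<Prod>e\<in>E. edge_length e) = (\<Prod>i<r. \<Prod>j\<leftarrow>filter (\<lambda>j. {w i, w j} \<in> E) [0..<i]. cmod (w i - w j))"
proof -
  define T where "T i = filter (\<lambda>j. {w i, w j} \<in> E) [0..<i]" for i
  define Pairs where "Pairs = Sigma {..<r} (\<lambda>i. set (T i))"
  have memP: "(i, j) \<in> Pairs \<longleftrightarrow> i < r \<and> j < i \<and> {w i, w j} \<in> E" for i j
    unfolding Pairs_def T_def by auto
  have dT: "distinct (T i)" for i unfolding T_def by simp
  have bij: "bij_betw (\<lambda>(i,j). {w i, w j}) Pairs E"
    unfolding bij_betw_def
  proof
    show "inj_on (\<lambda>(i,j). {w i, w j}) Pairs"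
    proof (rule inj_onI, clarify)
      fix i j i' j' assume p: "(i, j) \<in> Pairs" "(i', j') \<in> Pairs" and eq: "{w i, w j} = {w i', w j'}"
      have b: "i < r" "j < i" "i' < r" "j' < i'" using p memP by auto
      from eq have "(w i = w i' \<and> w j = w j') \<or> (w i = w j' \<and> w j = w i')" by (auto simp: doubleton_eq_iff)
      then show "i = i' \<and> j = j'"
      proof
        assume "w i = w i' \<and> w j = w j'"
        then show ?thesis using inj b unfolding inj_on_def by auto
      next
        assume "w i = w j' \<and> w j = w i'"
        then have "i = j'" "j = i'" using inj b unfolding inj_on_def by auto
        then show ?thesis using b by auto
      qed
    qed
    show "(\<lambda>(i,j). {w i, w j}) ` Pairs = E"
    proof (intro equalityI subsetI)
      fix e assume "e \<in> (\<lambda>(i,j). {w i, w j}) ` Pairs"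
      then show "e \<in> E" using memP by auto
    next
      fix e assume e: "e \<in> E"
      then obtain u v where uv: "e = {u, v}" "u \<in> w ` {..<r}" "v \<in> w ` {..<r}" "u \<noteq> v" using E by blast
      then obtain a b where ab: "a < r" "b < r" "u = w a" "v = w b" by auto
      then have "a \<noteq> b" using uv by auto
      then show "e \<in> (\<lambda>(i,j). {w i, w j}) ` Pairs"
      proof (cases "b < a")
        case True
        then have "(a, b) \<in> Pairs" using memP ab uv e by auto
        then show ?thesis using ab uv by (intro image_eqI[of _ _ "(a,b)"]) auto
      next
        case False
        then have "a < b" using \<open>a \<noteq> b\<close> by simp
        then have "(b, a) \<in> Pairs" using memP ab uv e by (auto simp: insert_commute)
        then show ?thesis using ab uv by (intro image_eqI[of _ _ "(b,a)"]) (auto simp: insert_commute)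
      qed
    qed
  qed
  have "card E = card Pairs" using bij_betw_same_card[OF bij] by simp
  also have "\<dots> = (\<Sum>i<r. card (set (T i)))" unfolding Pairs_def by (rule card_SigmaI) auto
  also have "\<dots> = (\<Sum>i<r. length (T i))" by (simp add: distinct_card dT)
  finally show "card E = (\<Sum>i<r. length (filter (\<lambda>j. {w i, w j} \<in> E) [0..<i]))" unfolding T_def .
  have "(\<Prod>e\<in>E. edge_length e) = (\<Prod>p\<in>Pairs. edge_length ((\<lambda>(i,j). {w i, w j}) p))"
    by (rule prod.reindex_bij_betw[OF bij, symmetric])
  also have "\<dots> = (\<Prod>(i,j)\<in>Pairs. cmod (w i - w j))"
    by (rule prod.cong) (auto simp: edge_length_pair)
  also have "\<dots> = (\<Prod>i<r. \<Prod>j\<in>set (T i). cmod (w i - w j))"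
    unfolding Pairs_def by (rule prod.Sigma[symmetric]) auto
  also have "\<dots> = (\<Prod>i<r. \<Prod>j\<leftarrow>T i. cmod (w i - w j))"
    by (rule prod.cong) (simp_all add: prod.distinct_set_conv_list dT)
  finally show "(\<Prod>e\<in>E. edge_length e) = (\<Prod>i<r. \<Prod>j\<leftarrow>filter (\<lambda>j. {w i, w j} \<in> E) [0..<i]. cmod (w i - w j))"
    unfolding T_def .
qed

lemma prod_list_ge_set:
  fixes f :: "'a \<Rightarrow> real"
  assumes "\<And>x. 1 \<le> f x"
  shows "(\<Prod>u\<in>set xs. f u) \<le> (\<Prod>x\<leftarrow>xs. f x)"
proof (induction xs)
  case Nil then show ?case by simp
next
  case (Cons x xs)
  have f1: "1 \<le> f x" by (rule assms)
  have p0: "0 \<le> (\<Prod>u\<in>set xs. f u)" by (rule prod_nonneg) (use assms order_trans zero_le_one in blast)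
  show ?case
  proof (cases "x \<in> set xs")
    case True
    then have "(\<Prod>u\<in>set (x # xs). f u) = (\<Prod>u\<in>set xs. f u)" by (simp add: insert_absorb)
    also have "\<dots> \<le> (\<Prod>x\<leftarrow>xs. f x)" by (rule Cons.IH)
    also have "\<dots> \<le> f x * (\<Prod>x\<leftarrow>xs. f x)" using f1 Cons.IH p0 by (simp add: mult_le_cancel_right1)
    finally show ?thesis by simp
  next
    case False
    then have "(\<Prod>u\<in>set (x # xs). f u) = f x * (\<Prod>u\<in>set xs. f u)" by simp
    also have "\<dots> \<le> f x * (\<Prod>x\<leftarrow>xs. f x)" using Cons.IH f1 by (intro mult_left_mono) auto
    finally show ?thesis by simp
  qed
qed

lemma prod_list_pos: "(\<And>x. x \<in> set xs \<Longrightarrow> 0 < (f x::real)) \<Longrightarrow> 0 < (\<Prod>x\<leftarrow>xs. f x)"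
  by (induction xs) auto

lemma sqrt_factor: "sqrt (real n ^ (2 * s + 1) / 3 ^ s) = sqrt (real n) * (real n / sqrt 3) ^ s"
proof -
  have "real n ^ (2 * s + 1) / 3 ^ s = real n * (real n / sqrt 3)^(2 * s)"
    by (simp add: power_mult power_divide power_mult_distrib[symmetric])
  also have "\<dots> = real n * ((real n / sqrt 3)^s)^2"
    by (simp add: power_mult[symmetric] mult.commute)
  finally show ?thesis by (simp add: real_sqrt_mult)
qed

lemma cube_root_bound:
  assumes "0 \<le> x" "x ^ 3 \<le> (3::real) ^ n"
  shows "x \<le> 3 powr (real n / 3)"
proof (rule ccontr)
  assume "\<not> x \<le> 3 powr (real n / 3)"
  then have lt: "3 powr (real n / 3) < x" by simp
  have "(3 powr (real n / 3)) ^ 3 = 3 powr (real n)"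
    by (simp add: powr_realpow[symmetric] powr_powr)
  also have "\<dots> = 3 ^ n" by (simp add: powr_realpow)
  finally have e: "(3 powr (real n / 3)) ^ 3 = 3 ^ n" .
  have "(3 powr (real n / 3)) ^ 3 < x ^ 3" by (rule power_strict_mono[OF lt]) auto
  then show False using e assms by simp
qed



lemma alg_id:
  fixes cE srr A sK Q B Mp t :: real
  assumes "0 < cE" "0 < srr"
  shows "A * sK * (Q * (B * srr * cE)) * (1 / Mp) * (1 / cE) * (1 / srr) * (1 / t) = Q * (A * B / Mp) * (sK / t)"
  using assms by (simp add: field_simps)

theorem theorem3:
  fixes P :: "complex poly" and V :: "complex set" and E :: "complex set set"
    and d r :: nat
  assumes "degree P = d" and "d \<ge> 1"
    and "r = card {x. poly P x = 0}"
    and "V \<subseteq> {x. poly P x = 0}"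
    and "E \<subseteq> {{u, v} | u v. u \<in> V \<and> v \<in> V \<and> u \<noteq> v}"
  shows "(\<Prod>e\<in>E. edge_length e) \<ge>
    sqrt (cmod (sDisc P (d - r))) * mahler_measure P powr (- (real r - 1))
    * (real r / sqrt 3) powr (- real (card E)) * real r powr (- real r / 2)
    * (1 / 3) powr (min (real d) (2 * real d - 2 * real r) / 6)"
proof -
  define a where "a = lead_coeff P"
  define xs where "xs = root_list P"
  have P0: "P \<noteq> 0" using assms(1,2) by auto
  have a0: "a \<noteq> 0" using P0 unfolding a_def by simp
  have Pxs: "P = Polynomial.smult a (\<Prod>x\<leftarrow>xs. [:- x, 1:])"
    unfolding a_def xs_def by (rule root_list_prop)
  have lenxs: "length xs = d"
  proof -
    have "degree P = degree (\<Prod>x\<leftarrow>xs. [:- x, 1:])" by (subst Pxs) (simp add: a0)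
    then show ?thesis using lin_prod[of xs] assms(1) by simp
  qed
  have rootset: "{x. poly P x = 0} = set xs"
  proof -
    have "poly P x = a * (\<Prod>y\<leftarrow>xs. x - y)" for x by (subst Pxs) (simp add: poly_lin_prod)
    then show ?thesis using a0 by (auto simp: prod_list_zero_iff)
  qed
  have r: "r = card (set xs)" using assms(3) rootset by simp
  have r1: "1 \<le> r"
  proof -
    have "xs \<noteq> []" using lenxs assms(2) by auto
    then have "set xs \<noteq> {}" by simp
    then show ?thesis using r by (simp add: Suc_leI card_gt_0_iff)
  qed
  have rd: "r \<le> d" using r lenxs card_length by metis
  define L where "L = sort_key cmod (remdups xs)"
  have Ld: "distinct L" and Ls: "set L = set xs" and Ll: "length L = r" and Lsort: "sorted (map cmod L)"
    unfolding L_def using r by (auto simp: distinct_card[symmetric])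
  define w where "w i = L ! i" for i
  have w_inj: "inj_on w {..<r}" unfolding w_def using Ld Ll by (auto simp: inj_on_def nth_eq_iff_index_eq)
  have w_img: "w ` {..<r} = set xs"
    unfolding w_def using Ls Ll by (auto simp: set_conv_nth)
  have w_mono: "cmod (w i) \<le> cmod (w j)" if "i \<le> j" "j < r" for i j
    using sorted_nth_mono[OF Lsort that(1)] that Ll unfolding w_def by simp
  define T where "T i = filter (\<lambda>j. {w i, w j} \<in> E) [0..<i]" for i
  have Tprop: "distinct (T i) \<and> set (T i) \<subseteq> {..<i}" for i unfolding T_def by auto
  have Tmono: "cmod (w j) \<le> cmod (w i)" if "i < r" "j \<in> set (T i)" for i j
    using that Tprop[of i] w_mono[of j i] by auto
  have core: "(\<Prod>i<r. (\<Prod>l<i. cmod (w i - w l)) / (\<Prod>j\<leftarrow>T i. cmod (w i - w j)))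
      \<le> (\<Prod>i<r. max 1 (cmod (w i)) ^ (r - 1) * sqrt (real r ^ (2 * length (T i) + 1) / 3 ^ length (T i)))"
    by (rule core_det[OF w_inj Tprop Tmono])
  have Eprop: "E \<subseteq> {{u, v} | u v. u \<in> w ` {..<r} \<and> v \<in> w ` {..<r} \<and> u \<noteq> v}"
  proof
    fix e assume "e \<in> E"
    then obtain u v where uv: "e = {u, v}" "u \<in> V" "v \<in> V" "u \<noteq> v" using assms(5) by blast
    have Vw: "V \<subseteq> w ` {..<r}" using assms(4) rootset w_img by simp
    show "e \<in> {{u, v} | u v. u \<in> w ` {..<r} \<and> v \<in> w ` {..<r} \<and> u \<noteq> v}"
    proof (rule CollectI, intro exI conjI)
      show "e = {u, v}" by (rule uv(1))
      show "u \<in> w ` {..<r}" "v \<in> w ` {..<r}" using uv(2,3) Vw by auto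
      show "u \<noteq> v" by (rule uv(4))
    qed
  qed
  have cardE: "card E = (\<Sum>i<r. length (T i))"
    unfolding T_def by (rule edges_lemma(1)[OF w_inj Eprop])
  have prodE: "(\<Prod>e\<in>E. edge_length e) = (\<Prod>i<r. \<Prod>j\<leftarrow>T i. cmod (w i - w j))"
    unfolding T_def by (rule edges_lemma(2)[OF w_inj Eprop])
  define Pi where "Pi = (\<Prod>i<r. \<Prod>l<i. cmod (w i - w l))"
  define Q where "Q = (\<Prod>i<r. \<Prod>j\<leftarrow>T i. cmod (w i - w j))"
  define MX where "MX = (\<Prod>i<r. max 1 (cmod (w i)))"
  define c where "c = real r / sqrt 3"
  have c0: "0 < c" unfolding c_def using r1 by simp
  have Qpos: "0 < Q"
    unfolding Q_def
  proof (rule prod_pos)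
    fix i assume i: "i \<in> {..<r}"
    have "0 < cmod (w i - w j)" if "j \<in> set (T i)" for j
    proof -
      from that have "j < i" using Tprop[of i] by auto
      then have "w i \<noteq> w j" using w_inj i unfolding inj_on_def by force
      then show "0 < cmod (w i - w j)" by simp
    qed
    then show "0 < (\<Prod>j\<leftarrow>T i. cmod (w i - w j))"
      by (rule prod_list_pos)
  qed
  have MX1: "1 \<le> MX" unfolding MX_def by (rule prod_ge_1) auto
  have core2: "Pi \<le> Q * (MX ^ (r - 1) * sqrt (real r) ^ r * c ^ card E)"
  proof -
    have "Pi / Q = (\<Prod>i<r. (\<Prod>l<i. cmod (w i - w l)) / (\<Prod>j\<leftarrow>T i. cmod (w i - w j)))"
      unfolding Pi_def Q_def by (simp add: prod_dividef)
    also have "\<dots> \<le> (\<Prod>i<r. max 1 (cmod (w i)) ^ (r - 1) * sqrt (real r ^ (2 * length (T i) + 1) / 3 ^ length (T i)))"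
      by (rule core)
    also have "\<dots> = (\<Prod>i<r. max 1 (cmod (w i)) ^ (r - 1) * (sqrt (real r) * c ^ length (T i)))"
      unfolding c_def by (simp only: sqrt_factor)
    also have "\<dots> = MX ^ (r - 1) * sqrt (real r) ^ r * c ^ card E"
      unfolding MX_def cardE by (simp add: prod.distrib prod_power_distrib power_sum)
    finally show ?thesis using Qpos by (simp add: divide_le_eq mult.commute)
  qed
  have MXset: "MX = (\<Prod>u\<in>set xs. max 1 (cmod u))"
    unfolding MX_def w_img[symmetric] by (rule prod.reindex[OF w_inj, symmetric, unfolded comp_def])
  have Mge: "cmod a * MX \<le> mahler_measure P"
    unfolding mahler_measure_def a_def[symmetric] xs_def[symmetric] MXset
    by (intro mult_left_mono prod_list_ge_set) auto
  have Mpos: "0 < mahler_measure P" using Mge MX1 a0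
    by (smt (verit, ccfv_SIG) mult_le_cancel_left1 norm_ge_zero zero_less_norm_iff)
  define K where "K = card {I. I \<subseteq> {0..<length xs} \<and> card I = card (set xs) \<and> inj_on (nth xs) I}"
  define Dset where "Dset = (\<Prod>(u,v)\<in>{(u,v). u\<in>set xs \<and> v\<in>set xs \<and> u\<noteq>v}. cmod (u - v))"
  have DPi: "Dset = Pi ^ 2"
  proof -
    have "Pi = (\<Prod>(i,l)\<in>Sigma {..<r} (\<lambda>i. {..<i}). cmod (w i - w l))"
      unfolding Pi_def by (rule prod.Sigma) auto
    also have "Sigma {..<r} (\<lambda>i. {..<i}) = {(i,j). i\<in>{..<r} \<and> j\<in>{..<r} \<and> j<i}" by auto
    also have "(\<Prod>(i,l)\<in>{(i,j). i\<in>{..<r} \<and> j\<in>{..<r} \<and> j<i}. cmod (w i - w l))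
        = (\<Prod>(i,l)\<in>{(i,j). i\<in>{..<r} \<and> j\<in>{..<r} \<and> i<j}. cmod (w i - w l))"
      by (rule prod_lt_gt[symmetric]) (simp add: norm_minus_commute)
    finally have Pi_eq: "Pi = (\<Prod>(i,l)\<in>{(i,j). i\<in>{..<r} \<and> j\<in>{..<r} \<and> i<j}. cmod (w i - w l))" .
    have off: "(\<Prod>(i,l)\<in>{(i,j). i\<in>{..<r} \<and> j\<in>{..<r} \<and> i\<noteq>j}. cmod (w i - w l))
        = (\<Prod>(i,l)\<in>{(i,j). i\<in>{..<r} \<and> j\<in>{..<r} \<and> i<j}. cmod (w i - w l))^2"
      by (rule prod_offd) (auto simp: norm_minus_commute)
    have "Pi ^ 2 = (\<Prod>(i,l)\<in>{(i,j). i\<in>{..<r} \<and> j\<in>{..<r} \<and> i\<noteq>j}. cmod (w i - w l))"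
      unfolding off Pi_eq ..
    also have "\<dots> = Dset" unfolding Dset_def
      by (rule prod_offd_reindex[OF w_inj w_img, of "\<lambda>u v. cmod (u - v)"])
    finally show ?thesis by simp
  qed
  have sd: "cmod (sDisc P (d - r)) \<le> cmod a ^ (2 * (r - 1)) * (real K * Pi ^ 2)"
  proof -
    have dr: "d - (d - r) = r" using rd by simp
    have s1: "sDisc P (d - r) = coeff P d ^ (2 * r - 2) *
       (\<Sum>I\<in>{I. I \<subseteq> {0..<d} \<and> card I = r}. \<Prod>(i,j)\<in>{(i,j). i\<in>I \<and> j\<in>I \<and> i<j}. (xs!i - xs!j)^2)"
      unfolding sDisc_def Let_def xs_def[symmetric] assms(1) dr ..
    have ca: "coeff P d = a" unfolding a_def assms(1)[symmetric] ..
    have "sDisc P (d - r) = a ^ (2 * r - 2) *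
       (\<Sum>I\<in>{I. I \<subseteq> {0..<length xs} \<and> card I = card (set xs)}. \<Prod>(i,j)\<in>{(i,j). i\<in>I \<and> j\<in>I \<and> i<j}. (xs!i - xs!j)^2)"
      by (subst s1) (simp only: ca lenxs r)
    then have "cmod (sDisc P (d - r)) = cmod a ^ (2 * (r - 1)) *
       cmod (\<Sum>I\<in>{I. I \<subseteq> {0..<length xs} \<and> card I = card (set xs)}. \<Prod>(i,j)\<in>{(i,j). i\<in>I \<and> j\<in>I \<and> i<j}. (xs!i - xs!j)^2)"
      by (simp add: norm_mult norm_power right_diff_distrib')
    also have "\<dots> \<le> cmod a ^ (2 * (r - 1)) * (real K * Dset)"
      unfolding K_def Dset_def by (intro mult_left_mono sdisc_sum_bound) simp
    finally show ?thesis using DPi by simp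
  qed
  have Kb: "sqrt (real K) \<le> 3 powr (min (real d) (2 * real d - 2 * real r) / 6)"
  proof -
    define Pm where "Pm = (\<Prod>u\<in>set xs. card {i. i < length xs \<and> xs!i = u})"
    have KP: "K \<le> Pm" unfolding K_def Pm_def by (rule good_card)
    have b1: "real K \<le> 3 powr (real d / 3)"
    proof (rule cube_root_bound)
      have "real K ^ 3 \<le> real Pm ^ 3" using KP by (simp add: power_mono)
      also have "\<dots> \<le> 3 ^ d" using mult_prod_bounds(1)[of xs] lenxs unfolding Pm_def
        by (metis of_nat_le_iff of_nat_numeral of_nat_power)
      finally show "real K ^ 3 \<le> 3 ^ d" .
    qed simp
    have b2: "real K \<le> 3 powr (real (2 * (d - r)) / 3)"
    proof (rule cube_root_bound)
      have "real K ^ 3 \<le> real Pm ^ 3" using KP by (simp add: power_mono)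
      also have "\<dots> \<le> 9 ^ (d - r)" using mult_prod_bounds(2)[of xs] lenxs r unfolding Pm_def
        by (metis of_nat_le_iff of_nat_numeral of_nat_power)
      also have "\<dots> = 3 ^ (2 * (d - r))" by (simp add: power_mult)
      finally show "real K ^ 3 \<le> 3 ^ (2 * (d - r))" .
    qed simp
    have e2: "real (2 * (d - r)) = 2 * real d - 2 * real r" using rd by simp
    have "real K \<le> 3 powr (min (real d) (2 * real d - 2 * real r) / 3)"
      using b1 b2 e2 by (cases "real d \<le> 2 * real d - 2 * real r") (simp_all add: min_def)
    then have "sqrt (real K) \<le> sqrt (3 powr (min (real d) (2 * real d - 2 * real r) / 3))"
      by (rule real_sqrt_le_mono)
    also have "\<dots> = 3 powr (min (real d) (2 * real d - 2 * real r) / 6)"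
      by (simp add: powr_half_sqrt[symmetric] powr_powr)
    finally show ?thesis .
  qed
  define M where "M = mahler_measure P"
  define mn where "mn = min (real d) (2 * real d - 2 * real r)"
  define S where "S = sqrt (cmod (sDisc P (d - r)))"
  have S_le: "S \<le> cmod a ^ (r - 1) * sqrt (real K) * Pi"
  proof -
    have "S \<le> sqrt (cmod a ^ (2 * (r - 1)) * (real K * Pi ^ 2))"
      unfolding S_def by (rule real_sqrt_le_mono[OF sd])
    also have "\<dots> = cmod a ^ (r - 1) * sqrt (real K) * Pi"
    proof -
      have Pi0: "0 \<le> Pi" unfolding Pi_def by (intro prod_nonneg) auto
      have "cmod a ^ (2 * (r - 1)) * (real K * Pi ^ 2) = (cmod a ^ (r - 1) * Pi)^2 * real K"
        by (simp add: power_mult_distrib power_mult[symmetric] mult_ac)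
      then have "sqrt (cmod a ^ (2 * (r - 1)) * (real K * Pi ^ 2)) = \<bar>cmod a ^ (r - 1) * Pi\<bar> * sqrt (real K)"
        by (simp only: real_sqrt_mult real_sqrt_abs)
      then show ?thesis using Pi0 by (simp add: abs_mult mult_ac)
    qed
    finally show ?thesis .
  qed
  have Mp: "0 < M" using Mpos unfolding M_def .
  have e1: "M powr (- (real r - 1)) = 1 / M ^ (r - 1)"
  proof -
    have "real r - 1 = real (r - 1)" using r1 by simp
    then have "M powr (- (real r - 1)) = inverse (M powr real (r - 1))" by (simp only: powr_minus)
    also have "M powr real (r - 1) = M ^ (r - 1)" by (rule powr_realpow[OF Mp])
    finally show ?thesis by (simp only: inverse_eq_divide)
  qed
  have e2: "(real r / sqrt 3) powr (- real (card E)) = 1 / c ^ card E"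
  proof -
    have "(real r / sqrt 3) powr (- real (card E)) = inverse (c powr real (card E))"
      unfolding c_def by (simp only: powr_minus)
    also have "c powr real (card E) = c ^ card E" by (rule powr_realpow[OF c0])
    finally show ?thesis by (simp only: inverse_eq_divide)
  qed
  have e3: "real r powr (- real r / 2) = 1 / sqrt (real r) ^ r"
  proof -
    have rp: "0 < real r" using r1 by simp
    have "real r powr (real r / 2) = sqrt (real r powr real r)"
      by (rule powr_half_sqrt_powr) simp
    also have "real r powr real r = real r ^ r" by (rule powr_realpow[OF rp])
    also have "sqrt (real r ^ r) = sqrt (real r) ^ r" by (rule real_sqrt_power)
    finally have h: "real r powr (real r / 2) = sqrt (real r) ^ r" .
    have "real r powr (- real r / 2) = real r powr (- (real r / 2))" by simp
    also have "\<dots> = inverse (real r powr (real r / 2))" by (rule powr_minus)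
    finally show ?thesis unfolding h by (simp only: inverse_eq_divide)
  qed
  have e4: "(1 / 3) powr (mn / 6) = 1 / 3 powr (mn / 6)"
    by (simp add: powr_divide)
  have Kb': "sqrt (real K) \<le> 3 powr (mn / 6)" using Kb unfolding mn_def .
  have aMX: "(cmod a * MX) ^ (r - 1) \<le> M ^ (r - 1)"
    unfolding M_def by (rule power_mono[OF Mge]) (use MX1 in simp)
  have sr: "0 < sqrt (real r) ^ r" using r1 by simp
  have t3: "0 < 3 powr (mn / 6)" by simp
  have "S * (1 / M ^ (r - 1)) * (1 / c ^ card E) * (1 / sqrt (real r) ^ r) * (1 / 3 powr (mn / 6))
      \<le> (cmod a ^ (r - 1) * sqrt (real K) * (Q * (MX ^ (r - 1) * sqrt (real r) ^ r * c ^ card E)))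
         * (1 / M ^ (r - 1)) * (1 / c ^ card E) * (1 / sqrt (real r) ^ r) * (1 / 3 powr (mn / 6))"
  proof -
    have "S \<le> cmod a ^ (r - 1) * sqrt (real K) * (Q * (MX ^ (r - 1) * sqrt (real r) ^ r * c ^ card E))"
    proof -
      have "cmod a ^ (r - 1) * sqrt (real K) * Pi \<le> cmod a ^ (r - 1) * sqrt (real K) * (Q * (MX ^ (r - 1) * sqrt (real r) ^ r * c ^ card E))"
        by (rule mult_left_mono[OF core2]) simp
      then show ?thesis using S_le by linarith
    qed
    then show ?thesis using Mp c0 sr t3 by (intro mult_right_mono) simp_all
  qed
  also have "\<dots> = Q * ((cmod a * MX) ^ (r - 1) / M ^ (r - 1)) * (sqrt (real K) / 3 powr (mn / 6))"
    using alg_id[of "c ^ card E" "sqrt (real r) ^ r" "cmod a ^ (r - 1)" "sqrt (real K)" Q "MX ^ (r - 1)" "M ^ (r - 1)" "3 powr (mn / 6)"] c0 sr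
    by (simp add: power_mult_distrib)
  also have "\<dots> \<le> Q * 1 * 1"
  proof (intro mult_mono)
    show "(cmod a * MX) ^ (r - 1) / M ^ (r - 1) \<le> 1" using aMX Mp by simp
    show "sqrt (real K) / 3 powr (mn / 6) \<le> 1" using Kb' t3 by simp
  qed (use Qpos Mp MX1 in simp_all)
  finally have fin: "S * (1 / M ^ (r - 1)) * (1 / c ^ card E) * (1 / sqrt (real r) ^ r) * (1 / 3 powr (mn / 6)) \<le> Q"
    by simp
  show ?thesis
    using fin unfolding e1[unfolded M_def, symmetric] e2[symmetric] e3[symmetric] e4[unfolded mn_def, symmetric]
      S_def M_def mn_def prodE Q_def by simp
qed

end
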